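(* Let $n\ge 1$ and let $x=x_1x_2\cdots x_n\in \mathrm{Av}_n(312)$. Then $x$ lies in the image $\mathsf{Pop}_{\mathrm{Av}_n(312)}(\mathrm{Av}_n(312))$ if and only if $x_n=n$ and $x$ has no consecutive double descent, i.e. there is no index $i$ with $x_i>x_{i+1}>x_{i+2}$.
   Context: $\mathrm{Av}_n(312)$ is the set of permutations $x_1\cdots x_n$ of $[n]$ with no indices $i<j<k$ such that $x_j<x_k<x_i$, partially ordered by the restriction of the right weak order on $S_n$ (in $S_n$, $y\lessdot x$ iff $y$ is obtained from $x$ by swapping two adjacent entries $x_i>x_{i+1}$); it is a lattice (isomorphic to the Tamari lattice). For a finite lattice $M$, $\mathsf{Pop}_M(x)=\bigwedge(\{y\in M: y\lessdot x\}\cup\{x\})$ where covers and meets are taken in $M$. *)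

theory Defs
  imports Main
begin

text \<open>Permutations of [n] as lists (0-based list indices; entries 1..n).\<close>
definition perms :: "nat \<Rightarrow> nat list set" where
  "perms n = {x. length x = n \<and> distinct x \<and> set x = {1..n}}"

definition Av312 :: "nat \<Rightarrow> nat list set" where
  "Av312 n = {x \<in> perms n. \<not> (\<exists>i j k. i < j \<and> j < k \<and> k < n \<and> x ! j < x ! k \<and> x ! k < x ! i)}"

definition weak_step :: "nat list \<Rightarrow> nat list \<Rightarrow> bool" where
  "weak_step x y \<longleftrightarrow> (\<exists>i. Suc i < length x \<and> x ! i > x ! Suc i \<and>
      y = x[i := x ! Suc i, Suc i := x ! i])"

definition weak_le :: "nat list \<Rightarrow> nat list \<Rightarrow> bool" where
  "weak_le y x \<longleftrightarrow> weak_step\<^sup>*\<^sup>* x y"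

definition covers_in :: "'a set \<Rightarrow> ('a \<Rightarrow> 'a \<Rightarrow> bool) \<Rightarrow> 'a \<Rightarrow> 'a \<Rightarrow> bool" where
  "covers_in M le y x \<longleftrightarrow> y \<in> M \<and> x \<in> M \<and> le y x \<and> y \<noteq> x \<and>
     \<not> (\<exists>z\<in>M. le y z \<and> le z x \<and> z \<noteq> y \<and> z \<noteq> x)"

definition is_meet_in :: "'a set \<Rightarrow> ('a \<Rightarrow> 'a \<Rightarrow> bool) \<Rightarrow> 'a set \<Rightarrow> 'a \<Rightarrow> bool" where
  "is_meet_in M le S m \<longleftrightarrow> m \<in> M \<and> (\<forall>s\<in>S. le m s) \<and>
     (\<forall>m'\<in>M. (\<forall>s\<in>S. le m' s) \<longrightarrow> le m' m)"

definition meet_in :: "'a set \<Rightarrow> ('a \<Rightarrow> 'a \<Rightarrow> bool) \<Rightarrow> 'a set \<Rightarrow> 'a" where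
  "meet_in M le S = (THE m. is_meet_in M le S m)"

definition Pop :: "'a set \<Rightarrow> ('a \<Rightarrow> 'a \<Rightarrow> bool) \<Rightarrow> 'a \<Rightarrow> 'a" where
  "Pop M le x = meet_in M le ({y \<in> M. covers_in M le y x} \<union> {x})"

end

theory Submission
  imports Defs
begin


definition bef :: "nat list \<Rightarrow> nat \<Rightarrow> nat \<Rightarrow> bool" where
  "bef x u v \<longleftrightarrow> (\<exists>i j. i < j \<and> j < length x \<and> x ! i = u \<and> x ! j = v)"

lemma bef_set: "bef x u v \<Longrightarrow> u \<in> set x \<and> v \<in> set x"
  unfolding bef_def by auto

lemma bef_irrefl: "distinct x \<Longrightarrow> \<not> bef x u u"
  unfolding bef_def using nth_eq_iff_index_eq by fastforce

lemma bef_asym: "distinct x \<Longrightarrow> bef x u v \<Longrightarrow> \<not> bef x v u"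
  unfolding bef_def
  by (metis (no_types, opaque_lifting) nth_eq_iff_index_eq order.strict_trans not_less_iff_gr_or_eq)

lemma bef_trans: "distinct x \<Longrightarrow> bef x u v \<Longrightarrow> bef x v w \<Longrightarrow> bef x u w"
  unfolding bef_def
  by (metis (no_types, opaque_lifting) nth_eq_iff_index_eq order.strict_trans)

lemma bef_total: "u \<in> set x \<Longrightarrow> v \<in> set x \<Longrightarrow> u \<noteq> v \<Longrightarrow> bef x u v \<or> bef x v u"
  unfolding bef_def in_set_conv_nth by (metis linorder_neqE_nat)

lemma bef_idx: "distinct x \<Longrightarrow> i < length x \<Longrightarrow> j < length x \<Longrightarrow> bef x (x!i) (x!j) \<longleftrightarrow> i < j"
  unfolding bef_def using nth_eq_iff_index_eq by fastforce

lemma bef_Nil[simp]: "\<not> bef [] u v" unfolding bef_def by auto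

lemma bef_Cons: "bef (c # x) u v \<longleftrightarrow> (u = c \<and> v \<in> set x) \<or> bef x u v"
proof
  assume "bef (c # x) u v"
  then obtain i j where ij: "i < j" "j < length (c#x)" "(c#x) ! i = u" "(c#x) ! j = v"
    unfolding bef_def by blast
  then obtain j' where j': "j = Suc j'" by (cases j) auto
  show "(u = c \<and> v \<in> set x) \<or> bef x u v"
  proof (cases i)
    case 0 then show ?thesis using ij j' by auto
  next
    case (Suc i') then show ?thesis using ij j' unfolding bef_def by auto
  qed
next
  assume "(u = c \<and> v \<in> set x) \<or> bef x u v"
  then show "bef (c # x) u v"
  proof
    assume "u = c \<and> v \<in> set x"
    then obtain j where "j < length x" "x ! j = v" by (auto simp: in_set_conv_nth)
    then show ?thesis unfolding bef_def using \<open>u = c \<and> v \<in> set x\<close>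
      by (intro exI[of _ 0] exI[of _ "Suc j"]) auto
  next
    assume "bef x u v"
    then obtain i j where "i < j" "j < length x" "x ! i = u" "x ! j = v" unfolding bef_def by blast
    then show ?thesis unfolding bef_def by (intro exI[of _ "Suc i"] exI[of _ "Suc j"]) auto
  qed
qed

lemma bef_append: "bef (x @ y) u v \<longleftrightarrow> bef x u v \<or> bef y u v \<or> (u \<in> set x \<and> v \<in> set y)"
  by (induction x) (auto simp: bef_Cons)



lemma perms_distinct: "x \<in> perms n \<Longrightarrow> distinct x" by (simp add: perms_def)
lemma perms_set: "x \<in> perms n \<Longrightarrow> set x = {1..n}" by (simp add: perms_def)
lemma perms_len: "x \<in> perms n \<Longrightarrow> length x = n" by (simp add: perms_def)

lemma Av312_alt_aux:
  assumes that: "x \<in> perms n"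
  shows "(\<exists>i j k. i < j \<and> j < k \<and> k < n \<and> x ! j < x ! k \<and> x ! k < x ! i) \<longleftrightarrow>
        (\<exists>a b c. a < b \<and> b < c \<and> bef x c a \<and> bef x a b)"
  proof
    assume "\<exists>i j k. i < j \<and> j < k \<and> k < n \<and> x ! j < x ! k \<and> x ! k < x ! i"
    then obtain i j k where ijk: "i < j" "j < k" "k < n" "x ! j < x ! k" "x ! k < x ! i" by blast
    have l: "length x = n" using perms_len[OF that] .
    have "bef x (x!i) (x!j)" unfolding bef_def using ijk l by (intro exI[of _ i] exI[of _ j]) simp
    moreover have "bef x (x!j) (x!k)" unfolding bef_def using ijk l by (intro exI[of _ j] exI[of _ k]) simp
    ultimately show "\<exists>a b c. a < b \<and> b < c \<and> bef x c a \<and> bef x a b"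
      using ijk by blast
  next
    assume "\<exists>a b c. a < b \<and> b < c \<and> bef x c a \<and> bef x a b"
    then obtain a b c where abc: "a < b" "b < c" "bef x c a" "bef x a b" by blast
    from abc(3) obtain i j where ij: "i < j" "j < length x" "x!i = c" "x!j = a" unfolding bef_def by blast
    from abc(4) obtain j' k where jk: "j' < k" "k < length x" "x!j' = a" "x!k = b" unfolding bef_def by blast
    have "j = j'" using nth_eq_iff_index_eq[OF perms_distinct[OF that], of j j'] ij jk by auto
    then show "\<exists>i j k. i < j \<and> j < k \<and> k < n \<and> x ! j < x ! k \<and> x ! k < x ! i"
      using ij jk abc perms_len[OF that] by (intro exI[of _ i] exI[of _ j] exI[of _ k]) auto
  qed

lemma Av312_alt: "Av312 n = {x \<in> perms n. \<not> (\<exists>a b c. a < b \<and> b < c \<and> bef x c a \<and> bef x a b)}"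
  unfolding Av312_def
proof (rule Collect_cong)
  fix x
  show "(x \<in> perms n \<and> \<not> (\<exists>i j k. i < j \<and> j < k \<and> k < n \<and> x ! j < x ! k \<and> x ! k < x ! i)) =
    (x \<in> perms n \<and> \<not> (\<exists>a b c. a < b \<and> b < c \<and> bef x c a \<and> bef x a b))"
    using Av312_alt_aux[of x n] by blast
qed

definition E :: "nat list \<Rightarrow> nat \<Rightarrow> nat" where
  "E x a = Max (insert a {b. a < b \<and> bef x b a})"

lemma E_fin: "finite (insert a {b. a < b \<and> bef x b a})"
proof -
  have "{b. a < b \<and> bef x b a} \<subseteq> set x" using bef_set by blast
  then show ?thesis using finite_subset by blast
qed

lemma E_ge: "a \<le> E x a"
  unfolding E_def using E_fin by simp

lemma E_bef: "a < b \<Longrightarrow> bef x b a \<Longrightarrow> b \<le> E x a"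
  unfolding E_def using E_fin by simp

lemma E_cases: "E x a = a \<or> (a < E x a \<and> bef x (E x a) a)"
proof -
  have "E x a \<in> insert a {b. a < b \<and> bef x b a}"
    unfolding E_def using E_fin by (rule Max_in) simp
  then show ?thesis by auto
qed

lemma E_notin: "a \<notin> set x \<Longrightarrow> E x a = a"
  using E_cases[of x a] bef_set[of x "E x a" a] by auto


definition AV where "AV n x \<longleftrightarrow> x \<in> Av312 n"

lemma AV_perms: "x \<in> Av312 n \<Longrightarrow> x \<in> perms n" unfolding Av312_def by auto

lemma AV_no: "x \<in> Av312 n \<Longrightarrow> a < b \<Longrightarrow> b < c \<Longrightarrow> bef x c a \<Longrightarrow> bef x a b \<Longrightarrow> False"
  unfolding Av312_alt by blast

lemma E_le_n: assumes "x \<in> Av312 n" "a \<le> n" shows "E x a \<le> n"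
proof (cases "E x a = a")
  case True then show ?thesis using assms by simp
next
  case False
  then have "bef x (E x a) a" using E_cases[of x a] by auto
  then have "E x a \<in> set x" using bef_set by blast
  then show ?thesis using perms_set[OF AV_perms[OF assms(1)]] by auto
qed

lemma E_out: assumes "x \<in> Av312 n" "a = 0 \<or> n < a" shows "E x a = a"
proof -
  have "a \<notin> set x" using perms_set[OF AV_perms[OF assms(1)]] assms(2) by auto
  then show ?thesis by (rule E_notin)
qed

lemma E_iff: assumes "x \<in> Av312 n" "a < b" shows "bef x b a \<longleftrightarrow> b \<le> E x a"
proof
  assume "bef x b a" then show "b \<le> E x a" using E_bef assms by blast
next
  assume b: "b \<le> E x a"
  then have ea: "a < E x a" "bef x (E x a) a" using E_cases[of x a] assms by auto
  have d: "distinct x" using AV_perms[OF assms(1)] perms_distinct by blast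
  have sx: "set x = {1..n}" using AV_perms[OF assms(1)] perms_set by blast
  have "a \<in> set x" using bef_set ea by blast
  then have "a \<ge> 1" "E x a \<le> n" using sx bef_set ea by auto
  then have bin: "b \<in> set x" using sx b assms(2) by auto
  show "bef x b a"
  proof (cases "b = E x a")
    case True then show ?thesis using ea by simp
  next
    case False
    show ?thesis
    proof (rule ccontr)
      assume "\<not> bef x b a"
      then have "bef x a b" using bef_total[OF \<open>a \<in> set x\<close> bin] assms(2) by auto
      then show False using AV_no[OF assms(1) assms(2) _ ea(2)] False b by simp
    qed
  qed
qed

lemma E_nest: assumes "x \<in> Av312 n" "a < b" "b \<le> E x a" shows "E x b \<le> E x a"
proof (cases "E x b = b")
  case True then show ?thesis using assms by simp
next
  case False
  then have eb: "b < E x b" "bef x (E x b) b" using E_cases[of x b] by auto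
  have ba: "bef x b a" using E_iff assms by blast
  have d: "distinct x" using AV_perms[OF assms(1)] perms_distinct by blast
  have "bef x (E x b) a" using bef_trans[OF d eb(2) ba] .
  then show ?thesis using E_bef eb assms(2) by simp
qed

definition vec :: "nat \<Rightarrow> (nat \<Rightarrow> nat) \<Rightarrow> bool" where
  "vec n e \<longleftrightarrow> (\<forall>a. a \<le> e a) \<and> (\<forall>a. a \<le> n \<longrightarrow> e a \<le> n) \<and> (\<forall>a. a = 0 \<or> n < a \<longrightarrow> e a = a)
     \<and> (\<forall>a b. a < b \<and> b \<le> e a \<longrightarrow> e b \<le> e a)"

lemma vec_E: assumes "x \<in> Av312 n" shows "vec n (E x)"
  unfolding vec_def
proof (intro conjI allI impI)
  fix a show "a \<le> E x a" by (rule E_ge)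
next
  fix a assume "a \<le> n" then show "E x a \<le> n" by (rule E_le_n[OF assms])
next
  fix a assume "a = 0 \<or> n < a" then show "E x a = a" by (rule E_out[OF assms])
next
  fix a b assume "a < b \<and> b \<le> E x a" then show "E x b \<le> E x a" using E_nest[OF assms] by simp
qed

definition Inv :: "nat list \<Rightarrow> (nat \<times> nat) set" where
  "Inv x = {(a, b). a < b \<and> bef x b a}"

lemma Inv_sub_E: assumes "x \<in> Av312 n" "y \<in> Av312 n"
  shows "Inv y \<subseteq> Inv x \<longleftrightarrow> (\<forall>a. E y a \<le> E x a)"
proof
  assume H: "Inv y \<subseteq> Inv x"
  show "\<forall>a. E y a \<le> E x a"
  proof
    fix a
    show "E y a \<le> E x a"
    proof (cases "E y a = a")
      case True then show ?thesis using E_ge by simp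
    next
      case False
      then have "a < E y a" "bef y (E y a) a" using E_cases[of y a] by auto
      then have "(a, E y a) \<in> Inv x" using H unfolding Inv_def by auto
      then show ?thesis using E_bef unfolding Inv_def by auto
    qed
  qed
next
  assume H: "\<forall>a. E y a \<le> E x a"
  show "Inv y \<subseteq> Inv x"
    unfolding Inv_def
  proof (clarsimp)
    fix a b assume ab: "a < b" "bef y b a"
    then have "b \<le> E y a" using E_iff[OF assms(2)] by blast
    then have "b \<le> E x a" using H le_trans by blast
    then show "bef x b a" using E_iff[OF assms(1) ab(1)] by blast
  qed
qed

lemma vec_ge: "vec n e \<Longrightarrow> a \<le> e a" unfolding vec_def by simp
lemma vec_le: "vec n e \<Longrightarrow> a \<le> n \<Longrightarrow> e a \<le> n" unfolding vec_def by simp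
lemma vec_out: "vec n e \<Longrightarrow> a = 0 \<or> n < a \<Longrightarrow> e a = a" unfolding vec_def by (elim conjE) (drule spec[of _ a], simp)
lemma vec_nest: "vec n e \<Longrightarrow> a < b \<Longrightarrow> b \<le> e a \<Longrightarrow> e b \<le> e a" unfolding vec_def by simp


function build :: "(nat \<Rightarrow> nat) \<Rightarrow> nat \<Rightarrow> nat \<Rightarrow> nat list" where
  "build e lo hi = (if hi < lo then [] else
     build e (Suc lo) (min (max (e lo) lo) hi) @ lo # build e (Suc (min (max (e lo) lo) hi)) hi)"
  by pat_completeness auto
termination by (relation "measure (\<lambda>(e,lo,hi). Suc hi - lo)") auto

declare build.simps[simp del]

lemma build_set: "set (build e lo hi) = {lo..hi}"
proof (induction e lo hi rule: build.induct)
  case (1 e lo hi)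
  show ?case
  proof (cases "hi < lo")
    case True then show ?thesis by (subst build.simps) auto
  next
    case False
    let ?m = "min (max (e lo) lo) hi"
    have "set (build e lo hi) = {Suc lo..?m} \<union> {lo} \<union> {Suc ?m..hi}"
      using 1 False by (subst build.simps) auto
    also have "\<dots> = {lo..hi}" using False by auto
    finally show ?thesis .
  qed
qed

lemma build_distinct: "distinct (build e lo hi)"
proof (induction e lo hi rule: build.induct)
  case (1 e lo hi)
  show ?case
  proof (cases "hi < lo")
    case True then show ?thesis by (subst build.simps) auto
  next
    case False
    then show ?thesis using 1 by (subst build.simps) (auto simp: build_set)
  qed
qed

definition valid :: "(nat \<Rightarrow> nat) \<Rightarrow> nat \<Rightarrow> nat \<Rightarrow> bool" where
  "valid e lo hi \<longleftrightarrow> (\<forall>a. lo \<le> a \<and> a \<le> hi \<longrightarrow> a \<le> e a \<and> e a \<le> hi \<and> (\<forall>b. a < b \<and> b \<le> e a \<longrightarrow> e b \<le> e a))"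

lemma build_bef:
  "valid e lo hi \<Longrightarrow> bef (build e lo hi) u v \<longleftrightarrow>
     (lo \<le> u \<and> u \<le> hi \<and> lo \<le> v \<and> v \<le> hi \<and> ((v < u \<and> u \<le> e v) \<or> (u < v \<and> e u < v)))"
proof (induction e lo hi arbitrary: u v rule: build.induct)
  case (1 e lo hi)
  show ?case
  proof (cases "hi < lo")
    case True then show ?thesis by (subst build.simps) auto
  next
    case False
    have v: "lo \<le> e lo" "e lo \<le> hi" "\<And>b. lo < b \<Longrightarrow> b \<le> e lo \<Longrightarrow> e b \<le> e lo"
      using "1.prems" False unfolding valid_def by auto
    then have m: "min (max (e lo) lo) hi = e lo" by simp
    have P: "\<And>a. lo \<le> a \<Longrightarrow> a \<le> hi \<Longrightarrow> a \<le> e a \<and> e a \<le> hi \<and> (\<forall>b. a < b \<and> b \<le> e a \<longrightarrow> e b \<le> e a)"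
      using "1.prems" unfolding valid_def by blast
    have v1: "valid e (Suc lo) (e lo)" unfolding valid_def
    proof (intro allI impI)
      fix a assume a: "Suc lo \<le> a \<and> a \<le> e lo"
      then have a2: "lo \<le> a" "a \<le> hi" using v by auto
      show "a \<le> e a \<and> e a \<le> e lo \<and> (\<forall>b. a < b \<and> b \<le> e a \<longrightarrow> e b \<le> e a)"
        using P[OF a2] v(3) a by auto
    qed
    have v2: "valid e (Suc (e lo)) hi" unfolding valid_def
    proof (intro allI impI)
      fix a assume a: "Suc (e lo) \<le> a \<and> a \<le> hi"
      then have a2: "lo \<le> a" "a \<le> hi" using v by auto
      show "a \<le> e a \<and> e a \<le> hi \<and> (\<forall>b. a < b \<and> b \<le> e a \<longrightarrow> e b \<le> e a)"
        using P[OF a2] by auto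
    qed
    have IH1: "\<And>u v. bef (build e (Suc lo) (e lo)) u v \<longleftrightarrow>
     (Suc lo \<le> u \<and> u \<le> e lo \<and> Suc lo \<le> v \<and> v \<le> e lo \<and> ((v < u \<and> u \<le> e v) \<or> (u < v \<and> e u < v)))"
      using "1.IH"(1)[OF False] v1 m by simp
    have IH2: "\<And>u v. bef (build e (Suc (e lo)) hi) u v \<longleftrightarrow>
     (Suc (e lo) \<le> u \<and> u \<le> hi \<and> Suc (e lo) \<le> v \<and> v \<le> hi \<and> ((v < u \<and> u \<le> e v) \<or> (u < v \<and> e u < v)))"
      using "1.IH"(2)[OF False] v2 m by simp
    have eq: "build e lo hi = build e (Suc lo) (e lo) @ lo # build e (Suc (e lo)) hi"
      using False m by (subst build.simps) simp
    have vv: "\<And>a. lo \<le> a \<Longrightarrow> a \<le> hi \<Longrightarrow> a \<le> e a \<and> e a \<le> hi" using "1.prems" unfolding valid_def by blast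
    have L: "bef (build e lo hi) u v \<longleftrightarrow>
      (Suc lo \<le> u \<and> u \<le> e lo \<and> Suc lo \<le> v \<and> v \<le> e lo \<and> ((v < u \<and> u \<le> e v) \<or> (u < v \<and> e u < v)))
      \<or> (u = lo \<and> Suc (e lo) \<le> v \<and> v \<le> hi)
      \<or> (Suc (e lo) \<le> u \<and> u \<le> hi \<and> Suc (e lo) \<le> v \<and> v \<le> hi \<and> ((v < u \<and> u \<le> e v) \<or> (u < v \<and> e u < v)))
      \<or> (Suc lo \<le> u \<and> u \<le> e lo \<and> (v = lo \<or> (Suc (e lo) \<le> v \<and> v \<le> hi)))"
      unfolding eq bef_append bef_Cons IH1 IH2 build_set list.set atLeastAtMost_iff insert_iff by blast
    have A1: "Suc lo \<le> u \<Longrightarrow> u \<le> e lo \<Longrightarrow> e u \<le> e lo" using v(3) by auto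
    have A2: "Suc lo \<le> v \<Longrightarrow> v \<le> e lo \<Longrightarrow> e v \<le> e lo" using v(3) by auto
    have R1: "lo \<le> u \<Longrightarrow> u \<le> hi \<Longrightarrow> u \<le> e u \<and> e u \<le> hi" using vv by blast
    have R2: "lo \<le> v \<Longrightarrow> v \<le> hi \<Longrightarrow> v \<le> e v \<and> e v \<le> hi" using vv by blast
    show ?thesis unfolding L
    proof (intro iffI)
      assume "(Suc lo \<le> u \<and> u \<le> e lo \<and> Suc lo \<le> v \<and> v \<le> e lo \<and> ((v < u \<and> u \<le> e v) \<or> (u < v \<and> e u < v)))
      \<or> (u = lo \<and> Suc (e lo) \<le> v \<and> v \<le> hi)
      \<or> (Suc (e lo) \<le> u \<and> u \<le> hi \<and> Suc (e lo) \<le> v \<and> v \<le> hi \<and> ((v < u \<and> u \<le> e v) \<or> (u < v \<and> e u < v)))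
      \<or> (Suc lo \<le> u \<and> u \<le> e lo \<and> (v = lo \<or> (Suc (e lo) \<le> v \<and> v \<le> hi)))"
      then show "lo \<le> u \<and> u \<le> hi \<and> lo \<le> v \<and> v \<le> hi \<and> ((v < u \<and> u \<le> e v) \<or> (u < v \<and> e u < v))"
      proof (elim disjE conjE)
        assume "u = lo" "Suc (e lo) \<le> v" "v \<le> hi" then show ?thesis using v by simp
      next
        assume "Suc lo \<le> u" "u \<le> e lo" "v = lo" then show ?thesis using v by simp
      next
        assume "Suc lo \<le> u" "u \<le> e lo" "Suc (e lo) \<le> v" "v \<le> hi"
        then show ?thesis using v(1,2) A1[OF \<open>Suc lo \<le> u\<close> \<open>u \<le> e lo\<close>] by simp
      qed (use v in simp_all)
    next
      assume R: "lo \<le> u \<and> u \<le> hi \<and> lo \<le> v \<and> v \<le> hi \<and> ((v < u \<and> u \<le> e v) \<or> (u < v \<and> e u < v))"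
      then have ru: "u \<le> e u" "e u \<le> hi" and rv: "v \<le> e v" "e v \<le> hi" using R1 R2 by auto
      consider "u = lo" | "Suc lo \<le> u \<and> u \<le> e lo" | "Suc (e lo) \<le> u" using R by linarith
      moreover have cv: "v = lo \<or> (Suc lo \<le> v \<and> v \<le> e lo) \<or> Suc (e lo) \<le> v" using R by linarith
      ultimately show "(Suc lo \<le> u \<and> u \<le> e lo \<and> Suc lo \<le> v \<and> v \<le> e lo \<and> ((v < u \<and> u \<le> e v) \<or> (u < v \<and> e u < v)))
      \<or> (u = lo \<and> Suc (e lo) \<le> v \<and> v \<le> hi)
      \<or> (Suc (e lo) \<le> u \<and> u \<le> hi \<and> Suc (e lo) \<le> v \<and> v \<le> hi \<and> ((v < u \<and> u \<le> e v) \<or> (u < v \<and> e u < v)))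
      \<or> (Suc lo \<le> u \<and> u \<le> e lo \<and> (v = lo \<or> (Suc (e lo) \<le> v \<and> v \<le> hi)))"
      proof cases
        case 1 then show ?thesis using cv R A1 A2 v(1,2) by auto
      next
        case 2 then show ?thesis using cv R A1 A2 v(1,2) by auto
      next
        case 3 then show ?thesis using cv R A1 A2 v(1,2) by auto
      qed
    qed
  qed
qed


lemma vec_valid: assumes "vec n e" shows "valid e 1 n"
  unfolding valid_def
proof (intro allI impI)
  fix a assume "1 \<le> a \<and> a \<le> n"
  then show "a \<le> e a \<and> e a \<le> n \<and> (\<forall>b. a < b \<and> b \<le> e a \<longrightarrow> e b \<le> e a)"
    using assms unfolding vec_def by blast
qed

lemma build_bef1: assumes "vec n e"
  shows "bef (build e 1 n) u v \<longleftrightarrow>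
     (1 \<le> u \<and> u \<le> n \<and> 1 \<le> v \<and> v \<le> n \<and> ((v < u \<and> u \<le> e v) \<or> (u < v \<and> e u < v)))"
  using build_bef[OF vec_valid[OF assms]] .

lemma build_perms: "build e 1 n \<in> perms n"
  unfolding perms_def using build_set[of e 1 n] build_distinct[of e 1 n] distinct_card[of "build e 1 n"]
  by auto

lemma build_Av: assumes "vec n e" shows "build e 1 n \<in> Av312 n"
  unfolding Av312_alt
proof (intro CollectI conjI notI build_perms)
  assume "\<exists>a b c. a < b \<and> b < c \<and> bef (build e 1 n) c a \<and> bef (build e 1 n) a b"
  then obtain a b c where abc: "a < b" "b < c" "bef (build e 1 n) c a" "bef (build e 1 n) a b" by blast
  have ea: "c \<le> e a" "1 \<le> a" "c \<le> n" using abc(1,2,3) build_bef1[OF assms] by auto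
  have "bef (build e 1 n) b a" using build_bef1[OF assms, of b a] abc(1,2) ea by auto
  then show False using bef_asym[OF build_distinct abc(4)] by blast
qed

lemma build_E: assumes "vec n e" shows "E (build e 1 n) = e"
proof
  fix a
  let ?x = "build e 1 n"
  have ge: "a \<le> e a" using vec_ge[OF assms] .
  show "E ?x a = e a"
  proof (rule antisym)
    show "E ?x a \<le> e a"
    proof (cases "E ?x a = a")
      case True then show ?thesis using ge by simp
    next
      case False
      then have "a < E ?x a" "bef ?x (E ?x a) a" using E_cases[of ?x a] by auto
      then have "(a < E ?x a \<and> E ?x a \<le> e a) \<or> (E ?x a < a \<and> e (E ?x a) < a)"
        using build_bef1[OF assms, of "E ?x a" a] by blast
      then show ?thesis using \<open>a < E ?x a\<close> by linarith
    qed
  next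
    show "e a \<le> E ?x a"
    proof (cases "e a = a")
      case True then show ?thesis using E_ge[of a ?x] by simp
    next
      case False
      then have lt: "a < e a" using ge by simp
      have "a \<noteq> 0" "\<not> n < a" using False vec_out[OF assms, of a] by metis+
      moreover have "e a \<le> n" using vec_le[OF assms] \<open>\<not> n < a\<close> by simp
      ultimately have "bef ?x (e a) a" using build_bef1[OF assms, of "e a" a] lt by linarith
      then show ?thesis using E_bef lt by blast
    qed
  qed
qed



lemma Inv_iff: "(u, v) \<in> Inv z \<longleftrightarrow> u < v \<and> bef z v u" unfolding Inv_def by simp

lemma bef_two: "bef [p, q] u v \<longleftrightarrow> u = p \<and> v = q"
  by (simp add: bef_Cons)

lemma split3: "Suc i < length x \<Longrightarrow> x = take i x @ [x!i, x!Suc i] @ drop (Suc (Suc i)) x"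
  by (metis Cons_nth_drop_Suc Suc_lessD append_Cons append_self_conv2 id_take_nth_drop)

lemma swap3: "Suc i < length x \<Longrightarrow> x[i := x!Suc i, Suc i := x!i] = take i x @ [x!Suc i, x!i] @ drop (Suc (Suc i)) x"
  by (rule nth_equalityI) (auto simp: nth_append nth_list_update min_def Suc_diff_Suc numeral_2_eq_2 nth_Cons')

lemma bef_swap_gen:
  assumes "distinct (A @ [p, q] @ C)"
  shows "bef (A @ [q, p] @ C) u v \<longleftrightarrow> (bef (A @ [p, q] @ C) u v \<and> \<not> (u = p \<and> v = q)) \<or> (u = q \<and> v = p)"
proof -
  have nA: "p \<notin> set A" "q \<notin> set A" "p \<notin> set C" "q \<notin> set C" "p \<noteq> q" "set A \<inter> set C = {}"
    using assms by auto
  show ?thesis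
    unfolding bef_append bef_two
    using nA bef_set[of A u v] bef_set[of C u v]
    by auto
qed

lemma swap_props:
  assumes d: "distinct x" and i: "Suc i < length x" and y: "y = x[i := x!Suc i, Suc i := x!i]"
  shows "distinct y" "set y = set x" "length y = length x"
    "bef y u v \<longleftrightarrow> (bef x u v \<and> \<not> (u = x!i \<and> v = x!Suc i)) \<or> (u = x!Suc i \<and> v = x!i)"
proof -
  let ?A = "take i x" and ?C = "drop (Suc (Suc i)) x" and ?p = "x!i" and ?q = "x!Suc i"
  have x3: "x = ?A @ [?p, ?q] @ ?C" using split3[OF i] .
  have y3: "y = ?A @ [?q, ?p] @ ?C" using swap3[OF i] y by simp
  have dd: "distinct (?A @ [?p, ?q] @ ?C)" using d x3 by simp
  then show "distinct y" unfolding y3 by auto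
  show "set y = set x" using x3 y3 by (metis append.simps(2) insert_commute list.simps(15) set_append)
  show "length y = length x" using y by simp
  show "bef y u v \<longleftrightarrow> (bef x u v \<and> \<not> (u = ?p \<and> v = ?q)) \<or> (u = ?q \<and> v = ?p)"
    using bef_swap_gen[OF dd, of u v] unfolding y3 x3[symmetric] .
qed

lemma weak_step_props:
  assumes "weak_step x y" "distinct x"
  shows "distinct y \<and> set y = set x \<and> length y = length x \<and> Inv y \<subseteq> Inv x"
proof -
  obtain i where i: "Suc i < length x" "x ! i > x ! Suc i" "y = x[i := x ! Suc i, Suc i := x ! i]"
    using assms(1) unfolding weak_step_def by blast
  note P = swap_props[OF assms(2) i(1) i(3)]
  have "Inv y \<subseteq> Inv x"
  proof
    fix w assume "w \<in> Inv y"
    then obtain u v where w: "w = (u, v)" "u < v" "bef y v u" unfolding Inv_def by auto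
    then have "bef x v u" using P(4)[of v u] i(2) bef_idx[OF assms(2), of i "Suc i"] i(1) by auto
    then show "w \<in> Inv x" using w unfolding Inv_def by auto
  qed
  then show ?thesis using P by blast
qed

lemma weak_le_Inv:
  assumes "weak_le y x" "distinct x"
  shows "distinct y \<and> set y = set x \<and> length y = length x \<and> Inv y \<subseteq> Inv x"
proof -
  have "weak_step\<^sup>*\<^sup>* x y" using assms(1) unfolding weak_le_def .
  then show ?thesis
  proof (induction rule: rtranclp_induct)
    case base then show ?case using assms(2) by simp
  next
    case (step y z)
    have "distinct z \<and> set z = set y \<and> length z = length y \<and> Inv z \<subseteq> Inv y"
      using weak_step_props[OF step(2)] step(3) by blast
    then show ?case using step(3) by auto
  qed
qed



lemma Inv_Cons: "Inv (a # xs) = Inv xs \<union> {(v, a) | v. v \<in> set xs \<and> v < a}"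
  unfolding Inv_def by (auto simp: bef_Cons)

lemma inj_Inv:
  "distinct x \<Longrightarrow> distinct y \<Longrightarrow> set x = set y \<Longrightarrow> Inv x = Inv y \<Longrightarrow> x = y"
proof (induction x arbitrary: y)
  case Nil then show ?case by simp
next
  case (Cons a xs)
  then obtain b ys where y: "y = b # ys" by (cases y) auto
  show ?case
  proof (cases "a = b")
    case True
    have s: "set xs = set ys" using Cons.prems y True by auto
    have "Inv xs = Inv ys"
    proof -
      have "Inv xs = Inv (a # xs) \<inter> {w. fst w \<noteq> a \<and> snd w \<noteq> a}"
        using Cons.prems(1) bef_set[of xs] unfolding Inv_Cons by (auto simp: Inv_def)
      moreover have "Inv ys = Inv (b # ys) \<inter> {w. fst w \<noteq> b \<and> snd w \<noteq> b}"
        using Cons.prems(2) y bef_set[of ys] unfolding Inv_Cons by (auto simp: Inv_def)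
      ultimately show ?thesis using Cons.prems(4) y True by simp
    qed
    then have "xs = ys" using Cons.IH[of ys] Cons.prems y s by simp
    then show ?thesis using y True by simp
  next
    case False
    have "b \<in> set xs" "a \<in> set ys" using Cons.prems(3) y False by auto
    then have ba: "bef y b a" and ab: "bef (a # xs) a b" using y by (auto simp: bef_Cons)
    have nab: "\<not> bef y a b" using bef_asym[OF Cons.prems(2) ba] .
    have nba: "\<not> bef (a # xs) b a" using bef_asym[OF Cons.prems(1) ab] .
    show ?thesis
    proof (cases "a < b")
      case True
      then have "(a, b) \<in> Inv y" using ba Inv_iff by blast
      moreover have "(a, b) \<notin> Inv (a # xs)" using nba Inv_iff by blast
      ultimately show ?thesis using Cons.prems(4) by simp
    next
      case False
      then have "b < a" using \<open>a \<noteq> b\<close> by simp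
      then have "(b, a) \<in> Inv (a # xs)" using ab Inv_iff by blast
      moreover have "(b, a) \<notin> Inv y" using nab Inv_iff by blast
      ultimately show ?thesis using Cons.prems(4) by simp
    qed
  qed
qed

lemma adj_desc_aux:
  assumes dx: "distinct x" and dy: "distinct y" and sy: "set y = set x" and sub: "Inv y \<subseteq> Inv x"
  shows "i + Suc d < length x \<Longrightarrow> x ! (i + Suc d) < x ! i \<Longrightarrow> (x ! (i + Suc d), x ! i) \<notin> Inv y \<Longrightarrow>
    \<exists>k. Suc k < length x \<and> x ! Suc k < x ! k \<and> (x ! Suc k, x ! k) \<notin> Inv y"
proof (induction d arbitrary: i rule: less_induct)
  case (less d)
  show ?case
  proof (cases d)
    case 0 then show ?thesis using less.prems by (intro exI[of _ i]) simp
  next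
    case (Suc d')
    let ?j = "i + Suc d" let ?a = "x ! ?j" let ?b = "x ! i" let ?c = "x ! Suc i"
    have j: "?j < length x" using less.prems by simp
    have j2: "Suc i + Suc d' = ?j" using Suc by simp
    have si: "Suc i < length x" using j Suc by simp
    have ne: "?c \<noteq> ?a" "?c \<noteq> ?b" using nth_eq_iff_index_eq[OF dx] j si Suc by auto
    have inx: "?a \<in> set x" "?b \<in> set x" "?c \<in> set x" using j si by auto
    have nyba: "\<not> bef y ?b ?a" using less.prems(2,3) Inv_iff by blast
    have bx_bc: "bef x ?b ?c" "bef x ?c ?a" "bef x ?b ?a" using bef_idx[OF dx] j si Suc by auto
    have IH0: "?c < ?b \<Longrightarrow> (?c, ?b) \<notin> Inv y \<Longrightarrow> ?thesis"
      using less.IH[of 0 i] Suc si by simp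
    have IH1: "?a < ?c \<Longrightarrow> (?a, ?c) \<notin> Inv y \<Longrightarrow> ?thesis"
      using less.IH[of d' "Suc i"] Suc j2 j by simp
    have tot: "\<And>u v. u \<in> set x \<Longrightarrow> v \<in> set x \<Longrightarrow> u \<noteq> v \<Longrightarrow> \<not> bef y u v \<Longrightarrow> bef y v u"
    proof -
      fix u v assume "u \<in> set x" "v \<in> set x" "u \<noteq> v" "\<not> bef y u v"
      then show "bef y v u" using bef_total[of u y v] sy by auto
    qed
    have notinv: "\<And>u v. u < v \<Longrightarrow> bef x u v \<Longrightarrow> \<not> bef y v u"
    proof
      fix u v assume uv: "u < v" "bef x u v" "bef y v u"
      then have "(u, v) \<in> Inv x" using sub Inv_iff by blast
      then show False using bef_asym[OF dx uv(2)] Inv_iff by blast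
    qed
    have trb: "bef y ?b ?c \<Longrightarrow> bef y ?c ?a \<Longrightarrow> False"
      using bef_trans[OF dy, of ?b ?c ?a] nyba by simp
    consider "?b < ?c" | "?c < ?a" | "?a < ?c \<and> ?c < ?b" using ne by linarith
    then show ?thesis
    proof cases
      case 1
      then have "?a < ?c" using less.prems(2) by simp
      show ?thesis
      proof (cases "(?a, ?c) \<in> Inv y")
        case False then show ?thesis using IH1 \<open>?a < ?c\<close> by blast
      next
        case True
        then have ca: "bef y ?c ?a" using Inv_iff by blast
        have "\<not> bef y ?c ?b" using notinv[OF 1 bx_bc(1)] .
        then have "bef y ?b ?c" using tot[OF inx(3) inx(2) ne(2)] by simp
        then show ?thesis using trb ca by blast
      qed
    next
      case 2
      then have "?c < ?b" using less.prems(2) by simp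
      show ?thesis
      proof (cases "(?c, ?b) \<in> Inv y")
        case False then show ?thesis using IH0 \<open>?c < ?b\<close> by blast
      next
        case True
        then have bc: "bef y ?b ?c" using Inv_iff by blast
        have "\<not> bef y ?a ?c" using notinv[OF 2 bx_bc(2)] .
        then have "bef y ?c ?a" using tot[OF inx(1) inx(3) ne(1)[symmetric]] by simp
        then show ?thesis using trb bc by blast
      qed
    next
      case 3
      show ?thesis
      proof (cases "(?c, ?b) \<in> Inv y \<and> (?a, ?c) \<in> Inv y")
        case False then show ?thesis using IH0 IH1 3 by blast
      next
        case True
        then have "bef y ?b ?c" "bef y ?c ?a" using Inv_iff by blast+
        then show ?thesis using trb by blast
      qed
    qed
  qed
qed

lemma adj_desc:
  assumes dx: "distinct x" and dy: "distinct y" and sy: "set y = set x" and sub: "Inv y \<subseteq> Inv x"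
    and ne: "Inv y \<noteq> Inv x"
  shows "\<exists>k. Suc k < length x \<and> x ! Suc k < x ! k \<and> (x ! Suc k, x ! k) \<notin> Inv y"
proof -
  obtain u v where uv: "(u, v) \<in> Inv x" "(u, v) \<notin> Inv y" using sub ne by auto
  then have "u < v" "bef x v u" using Inv_iff by auto
  then obtain p q where pq: "p < q" "q < length x" "x ! p = v" "x ! q = u" unfolding bef_def by blast
  obtain d where d0: "q = Suc (p + d)" using less_imp_Suc_add[OF pq(1)] by blast
  then have d: "q = p + Suc d" by simp
  have h: "p + Suc d < length x" "x ! (p + Suc d) < x ! p" "(x ! (p + Suc d), x ! p) \<notin> Inv y"
    using pq d uv(2) \<open>u < v\<close> by simp_all
  show ?thesis by (rule adj_desc_aux[OF dx dy sy sub h])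
qed



lemma Inv_finite: "finite (Inv x)"
proof -
  have "Inv x \<subseteq> set x \<times> set x" unfolding Inv_def using bef_set by auto
  then show ?thesis using finite_subset by blast
qed

lemma weak_from_Inv:
  "distinct x \<Longrightarrow> distinct y \<Longrightarrow> set y = set x \<Longrightarrow> Inv y \<subseteq> Inv x \<Longrightarrow> weak_le y x"
proof (induction "card (Inv x)" arbitrary: x rule: less_induct)
  case less
  show ?case
  proof (cases "Inv y = Inv x")
    case True
    then have "x = y" using inj_Inv[OF less.prems(1,2)] less.prems(3) by simp
    then show ?thesis unfolding weak_le_def by simp
  next
    case False
    obtain k where k: "Suc k < length x" "x ! Suc k < x ! k" "(x ! Suc k, x ! k) \<notin> Inv y"
      using adj_desc[OF less.prems(1,2,3,4) False] by blast
    define x' where "x' = x[k := x ! Suc k, Suc k := x ! k]"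
    note P = swap_props[OF less.prems(1) k(1) x'_def]
    have step: "weak_step x x'" unfolding weak_step_def x'_def using k(1,2) by (intro exI[of _ k]) simp
    have I: "Inv x' = Inv x - {(x ! Suc k, x ! k)}"
    proof (rule set_eqI)
      fix w :: "nat \<times> nat"
      obtain u v where w: "w = (u, v)" by (cases w)
      have b: "bef x' v u \<longleftrightarrow> (bef x v u \<and> \<not> (v = x ! k \<and> u = x ! Suc k)) \<or> (v = x ! Suc k \<and> u = x ! k)"
        by (rule P(4))
      have c: "u < v \<Longrightarrow> \<not> (v = x ! Suc k \<and> u = x ! k)" using k(2) by auto
      show "w \<in> Inv x' \<longleftrightarrow> w \<in> Inv x - {(x ! Suc k, x ! k)}"
        unfolding w Inv_iff Diff_iff singleton_iff b using c by blast
    qed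
    have mem: "(x ! Suc k, x ! k) \<in> Inv x"
      using k(1,2) bef_idx[OF less.prems(1), of k "Suc k"] Inv_iff by auto
    have "card (Inv x') < card (Inv x)"
      unfolding I by (rule card_Diff1_less[OF Inv_finite mem])
    moreover have "Inv y \<subseteq> Inv x'" unfolding I using less.prems(4) k(3) by auto
    ultimately have "weak_le y x'" using less.hyps[of x', OF _ P(1) less.prems(2)] P(2) less.prems(3) by simp
    then show ?thesis unfolding weak_le_def using step
      by (rule converse_rtranclp_into_rtranclp[rotated])
  qed
qed



lemma le_E: assumes "x \<in> Av312 n" "y \<in> Av312 n"
  shows "weak_le y x \<longleftrightarrow> (\<forall>a. E y a \<le> E x a)"
proof
  assume "weak_le y x"
  then have "Inv y \<subseteq> Inv x" using weak_le_Inv perms_distinct[OF AV_perms[OF assms(1)]] by blast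
  then show "\<forall>a. E y a \<le> E x a" using Inv_sub_E[OF assms] by blast
next
  assume "\<forall>a. E y a \<le> E x a"
  then have "Inv y \<subseteq> Inv x" using Inv_sub_E[OF assms] by blast
  moreover have "distinct x" "distinct y" "set y = set x"
    using AV_perms[OF assms(1)] AV_perms[OF assms(2)] perms_distinct perms_set by auto
  ultimately show "weak_le y x" using weak_from_Inv by blast
qed

lemma eq_E: assumes "x \<in> Av312 n" "y \<in> Av312 n" "\<forall>a. E x a = E y a" shows "x = y"
proof -
  have "Inv y \<subseteq> Inv x" "Inv x \<subseteq> Inv y" using Inv_sub_E[OF assms(1,2)] Inv_sub_E[OF assms(2,1)] assms(3)
    by simp_all
  then have "Inv x = Inv y" by blast
  moreover have "distinct x" "distinct y" "set x = set y"
    using AV_perms[OF assms(1)] AV_perms[OF assms(2)] perms_distinct perms_set by auto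
  ultimately show ?thesis using inj_Inv by blast
qed

definition vp :: "(nat \<Rightarrow> nat) \<Rightarrow> nat \<Rightarrow> nat \<Rightarrow> bool" where
  "vp e a m \<longleftrightarrow> (\<forall>b. a < b \<and> b \<le> m \<longrightarrow> e b \<le> m)"

definition K :: "(nat \<Rightarrow> nat) \<Rightarrow> nat \<Rightarrow> nat" where
  "K e a = (if e a = a then a else Max {m. a \<le> m \<and> m < e a \<and> vp e a m})"

lemma K_set: assumes "e a \<noteq> a" "a \<le> e a"
  shows "finite {m. a \<le> m \<and> m < e a \<and> vp e a m}" "a \<in> {m. a \<le> m \<and> m < e a \<and> vp e a m}"
proof -
  show "finite {m. a \<le> m \<and> m < e a \<and> vp e a m}" by (rule finite_subset[of _ "{..<e a}"]) auto
  show "a \<in> {m. a \<le> m \<and> m < e a \<and> vp e a m}" using assms unfolding vp_def by auto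
qed

lemma K_props: assumes ge: "a \<le> e a"
  shows "a \<le> K e a" "K e a \<le> e a" "e a \<noteq> a \<Longrightarrow> K e a < e a" "vp e a (K e a)"
    "\<And>m. a \<le> m \<Longrightarrow> m < e a \<Longrightarrow> vp e a m \<Longrightarrow> m \<le> K e a" "e a = a \<Longrightarrow> K e a = a"
proof -
  show "e a = a \<Longrightarrow> K e a = a" unfolding K_def by simp
  show lt: "e a \<noteq> a \<Longrightarrow> K e a < e a"
  proof -
    assume ne: "e a \<noteq> a"
    have "K e a \<in> {m. a \<le> m \<and> m < e a \<and> vp e a m}"
      unfolding K_def using ne K_set[of e a, OF ne ge] by (simp del: mem_Collect_eq) (rule Max_in, auto)
    then show ?thesis by simp
  qed
  show "a \<le> K e a"
  proof (cases "e a = a")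
    case True then show ?thesis unfolding K_def by simp
  next
    case False
    have "K e a \<in> {m. a \<le> m \<and> m < e a \<and> vp e a m}"
      unfolding K_def using False K_set[of e a, OF False ge] by (simp del: mem_Collect_eq) (rule Max_in, auto)
    then show ?thesis by simp
  qed
  show "K e a \<le> e a" using lt ge unfolding K_def by (cases "e a = a") auto
  show "vp e a (K e a)"
  proof (cases "e a = a")
    case True then show ?thesis unfolding K_def vp_def by simp
  next
    case False
    have "K e a \<in> {m. a \<le> m \<and> m < e a \<and> vp e a m}"
      unfolding K_def using False K_set[of e a, OF False ge] by (simp del: mem_Collect_eq) (rule Max_in, auto)
    then show ?thesis by simp
  qed
  show "\<And>m. a \<le> m \<Longrightarrow> m < e a \<Longrightarrow> vp e a m \<Longrightarrow> m \<le> K e a"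
  proof -
    fix m assume m: "a \<le> m" "m < e a" "vp e a m"
    then have False: "e a \<noteq> a" by simp
    have "m \<le> Max {m. a \<le> m \<and> m < e a \<and> vp e a m}"
      using K_set[of e a, OF False ge] m by (intro Max_ge) auto
    then show "m \<le> K e a" unfolding K_def using False by simp
  qed
qed

lemma vec_K: assumes "vec n e" shows "vec n (K e)"
  unfolding vec_def
proof (intro conjI allI impI)
  fix a
  note P = K_props[of a e, OF vec_ge[OF assms, of a]]
  show "a \<le> K e a" using P(1) .
  show "a \<le> n \<Longrightarrow> K e a \<le> n" using P(2) vec_le[OF assms, of a] by simp
  show "a = 0 \<or> n < a \<Longrightarrow> K e a = a" using P(6) vec_out[OF assms, of a] by simp
next
  fix a b assume ab: "a < b \<and> b \<le> K e a"
  note P = K_props[of a e, OF vec_ge[OF assms, of a]]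
  note Q = K_props[of b e, OF vec_ge[OF assms, of b]]
  have "e b \<le> K e a" using P(4) ab unfolding vp_def by blast
  then show "K e b \<le> K e a" using Q(2) by simp
qed



lemma cover_vec: assumes v: "vec n e" and ne: "e a \<noteq> a" shows "vec n (e(a := K e a))"
proof -
  note P = K_props[of a e, OF vec_ge[OF v, of a]]
  have an: "a \<noteq> 0" "\<not> n < a" using ne vec_out[OF v, of a] by metis+
  show ?thesis unfolding vec_def
  proof (intro conjI allI impI)
    fix b
    show "b \<le> (e(a := K e a)) b" using P(1) vec_ge[OF v, of b] by simp
    show "b \<le> n \<Longrightarrow> (e(a := K e a)) b \<le> n" using P(2) vec_le[OF v, of b] vec_le[OF v, of a] an by auto
    show "b = 0 \<or> n < b \<Longrightarrow> (e(a := K e a)) b = b" using vec_out[OF v, of b] an by auto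
  next
    fix b c assume bc: "b < c \<and> c \<le> (e(a := K e a)) b"
    show "(e(a := K e a)) c \<le> (e(a := K e a)) b"
    proof (cases "b = a")
      case True
      then have "c \<noteq> a" "c \<le> K e a" using bc by auto
      then show ?thesis using P(4) bc True unfolding vp_def by auto
    next
      case False
      then have cb: "c \<le> e b" using bc by simp
      show ?thesis
      proof (cases "c = a")
        case True
        then have "e a \<le> e b" using vec_nest[OF v, of b c] bc cb by simp
        then show ?thesis using True False P(2) by simp
      next
        case False2: False
        then show ?thesis using False vec_nest[OF v, of b c] bc cb by simp
      qed
    qed
  qed
qed

lemma cover_w:
  assumes x: "x \<in> Av312 n" and ne: "E x a \<noteq> a"
  shows "covers_in (Av312 n) weak_le (build ((E x)(a := K (E x) a)) 1 n) x"
proof -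
  let ?e = "E x" let ?e' = "(E x)(a := K (E x) a)" let ?w = "build ?e' 1 n"
  have v: "vec n ?e" using vec_E[OF x] .
  note P = K_props[of a ?e, OF vec_ge[OF v, of a]]
  have v': "vec n ?e'" using cover_vec[OF v ne] .
  have w: "?w \<in> Av312 n" using build_Av[OF v'] .
  have Ew: "E ?w = ?e'" using build_E[OF v'] .
  have le1: "weak_le ?w x" unfolding le_E[OF x w] Ew using P(2) by simp
  have neq: "?w \<noteq> x"
  proof
    assume "?w = x"
    then have "E ?w a = E x a" by simp
    then show False using Ew P(3)[OF ne] by simp
  qed
  have nobetween: "\<not> (\<exists>z\<in>Av312 n. weak_le ?w z \<and> weak_le z x \<and> z \<noteq> ?w \<and> z \<noteq> x)"
  proof
    assume "\<exists>z\<in>Av312 n. weak_le ?w z \<and> weak_le z x \<and> z \<noteq> ?w \<and> z \<noteq> x"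
    then obtain z where z: "z \<in> Av312 n" "weak_le ?w z" "weak_le z x" "z \<noteq> ?w" "z \<noteq> x" by blast
    have lo: "\<And>b. ?e' b \<le> E z b" using z(2) unfolding le_E[OF z(1) w] Ew by blast
    have hi: "\<And>b. E z b \<le> ?e b" using z(3) unfolding le_E[OF x z(1)] by blast
    have same: "\<And>b. b \<noteq> a \<Longrightarrow> E z b = ?e b" using lo hi by (metis antisym fun_upd_other)
    show False
    proof (cases "E z a < ?e a")
      case True
      have "vp ?e a (E z a)" unfolding vp_def
      proof (intro allI impI)
        fix c assume c: "a < c \<and> c \<le> E z a"
        then have "E z c \<le> E z a" using E_nest[OF z(1), of a c] by simp
        then show "?e c \<le> E z a" using same[of c] c by simp
      qed
      then have "E z a \<le> K ?e a" using P(5)[of "E z a"] E_ge[of a z] True by simp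
      moreover have "K ?e a \<le> E z a" using lo[of a] by simp
      ultimately have "\<forall>b. E z b = E ?w b" using same Ew by simp
      then show False using eq_E[OF z(1) w] z(4) by blast
    next
      case False
      then have "E z a = ?e a" using hi[of a] by simp
      then have "\<forall>b. E z b = E x b" using same by metis
      then show False using eq_E[OF z(1) x] z(5) by blast
    qed
  qed
  show ?thesis unfolding covers_in_def using w x le1 neq nobetween by blast
qed

lemma cover_ge:
  assumes x: "x \<in> Av312 n" and c: "covers_in (Av312 n) weak_le y x"
  shows "K (E x) b \<le> E y b"
proof -
  have y: "y \<in> Av312 n" "weak_le y x" "y \<noteq> x" using c unfolding covers_in_def by blast+
  have le: "\<And>b. E y b \<le> E x b" using y(2) unfolding le_E[OF x y(1)] by blast
  let ?D = "{a. E y a < E x a}"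
  have Dsub: "?D \<subseteq> {0..n}"
  proof
    fix a assume "a \<in> ?D"
    then have "E y a \<noteq> E x a" by simp
    then show "a \<in> {0..n}" using E_out[OF x, of a] E_out[OF y(1), of a] by fastforce
  qed
  have Dne: "?D \<noteq> {}"
  proof
    assume "?D = {}"
    then have "\<forall>a. E y a = E x a" using le by (metis (mono_tags, lifting) empty_iff mem_Collect_eq antisym_conv2)
    then show False using eq_E[OF y(1) x] y(3) by blast
  qed
  have Dfin: "finite ?D" using Dsub finite_subset by blast
  define a where "a = Max ?D"
  have aD: "a \<in> ?D" unfolding a_def using Dfin Dne by (rule Max_in)
  have above: "\<And>b. a < b \<Longrightarrow> E y b = E x b"
  proof -
    fix b assume "a < b"
    then have "b \<notin> ?D" unfolding a_def using Dfin Max_ge leD by blast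
    then show "E y b = E x b" using le[of b] by simp
  qed
  have ne: "E x a \<noteq> a" using aD E_ge[of a y] by simp
  note P = K_props[of a "E x", OF E_ge]
  have "vp (E x) a (E y a)" unfolding vp_def
  proof (intro allI impI)
    fix c assume c: "a < c \<and> c \<le> E y a"
    then have "E y c \<le> E y a" using E_nest[OF y(1), of a c] by simp
    then show "E x c \<le> E y a" using above[of c] c by simp
  qed
  then have Ka: "E y a \<le> K (E x) a" using P(5)[of "E y a"] E_ge[of a y] aD by simp
  let ?e' = "(E x)(a := K (E x) a)" let ?w = "build ?e' 1 n"
  have cw: "covers_in (Av312 n) weak_le ?w x" using cover_w[OF x ne] .
  have v': "vec n ?e'" using cover_vec[OF vec_E[OF x] ne] .
  have w: "?w \<in> Av312 n" using build_Av[OF v'] .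
  have Ew: "E ?w = ?e'" using build_E[OF v'] .
  have "weak_le y ?w" unfolding le_E[OF w y(1)] Ew using le Ka by simp
  moreover have "weak_le ?w x" using cw unfolding covers_in_def by blast
  ultimately have "y = ?w \<or> ?w = x" using c w unfolding covers_in_def by blast
  moreover have "?w \<noteq> x" using cw unfolding covers_in_def by blast
  ultimately have "y = ?w" by blast
  then have "E y = ?e'" using Ew by simp
  then show ?thesis
    using K_props(2)[of b "E x", OF E_ge] by (cases "b = a") auto
qed



lemma Pop_E: assumes x: "x \<in> Av312 n"
  shows "Pop (Av312 n) weak_le x = build (K (E x)) 1 n"
proof -
  let ?M = "Av312 n"
  let ?S = "{y \<in> ?M. covers_in ?M weak_le y x} \<union> {x}"
  let ?P = "build (K (E x)) 1 n"
  have vK: "vec n (K (E x))" using vec_K[OF vec_E[OF x]] .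
  have P: "?P \<in> ?M" using build_Av[OF vK] .
  have EP: "E ?P = K (E x)" using build_E[OF vK] .
  have meet: "is_meet_in ?M weak_le ?S ?P"
    unfolding is_meet_in_def
  proof (intro conjI ballI impI)
    show "?P \<in> ?M" using P .
  next
    fix s assume "s \<in> ?S"
    then consider "s = x" | "s \<in> ?M" "covers_in ?M weak_le s x" by blast
    then show "weak_le ?P s"
    proof cases
      case 1
      show ?thesis unfolding 1 le_E[OF x P] EP using K_props(2)[of _ "E x", OF E_ge] by blast
    next
      case 2
      show ?thesis unfolding le_E[OF 2(1) P] EP using cover_ge[OF x 2(2)] by blast
    qed
  next
    fix m assume m: "m \<in> ?M" and lb: "\<forall>s\<in>?S. weak_le m s"
    have "E m b \<le> K (E x) b" for b
    proof (cases "E x b = b")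
      case True
      have "weak_le m x" using lb by blast
      then have "E m b \<le> E x b" using le_E[OF x m] by blast
      then show ?thesis using True K_props(6)[of b "E x", OF E_ge] by simp
    next
      case False
      let ?e' = "(E x)(b := K (E x) b)" let ?w = "build ?e' 1 n"
      have cw: "covers_in ?M weak_le ?w x" using cover_w[OF x False] .
      have v': "vec n ?e'" using cover_vec[OF vec_E[OF x] False] .
      have w: "?w \<in> ?M" using build_Av[OF v'] .
      have "?w \<in> ?S" using cw w by blast
      then have "weak_le m ?w" using lb by blast
      then have "E m b \<le> E ?w b" using le_E[OF w m] by blast
      then show ?thesis using build_E[OF v'] by simp
    qed
    then show "weak_le m ?P" unfolding le_E[OF P m] EP by blast
  qed
  have uniq: "m = ?P" if "is_meet_in ?M weak_le ?S m" for m
  proof -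
    have m: "m \<in> ?M" using that unfolding is_meet_in_def by blast
    have "weak_le m ?P" using meet that m unfolding is_meet_in_def by blast
    moreover have "weak_le ?P m" using meet that P unfolding is_meet_in_def by blast
    ultimately have "\<forall>a. E m a = E ?P a" using le_E[OF P m] le_E[OF m P] by (simp add: antisym)
    then show ?thesis using eq_E[OF m P] by blast
  qed
  have "meet_in ?M weak_le ?S = ?P"
    unfolding meet_in_def using meet uniq by (rule the_equality)
  then show ?thesis unfolding Pop_def .
qed



lemma img_fwd:
  assumes v: "vec n e"
  shows "(\<forall>a. 1 \<le> a \<and> a < n \<longrightarrow> K e a < n) \<and> \<not> (\<exists>a b. a < b \<and> b < K e a \<and> K e b = K e a)"
proof (intro conjI allI impI notI)
  fix a assume a: "1 \<le> a \<and> a < n"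
  note P = K_props[of a e, OF vec_ge[OF v, of a]]
  show "K e a < n"
  proof (cases "e a = a")
    case True then show ?thesis using P(6) a by simp
  next
    case False then show ?thesis using P(3) vec_le[OF v, of a] a by simp
  qed
next
  assume "\<exists>a b. a < b \<and> b < K e a \<and> K e b = K e a"
  then obtain a b where ab: "a < b" "b < K e a" "K e b = K e a" by blast
  note P = K_props[of a e, OF vec_ge[OF v, of a]]
  note Q = K_props[of b e, OF vec_ge[OF v, of b]]
  have eb: "e b \<le> K e a" using P(4) ab unfolding vp_def by simp
  show False
  proof (cases "e b = b")
    case True then show ?thesis using Q(6) ab by simp
  next
    case False then show ?thesis using Q(3) eb ab by simp
  qed
qed

function fz :: "(nat \<Rightarrow> nat) \<Rightarrow> nat \<Rightarrow> nat \<Rightarrow> nat" where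
  "fz t n a = (if a < t a \<and> t a < n then fz t n (Suc (t a)) else a)"
  by pat_completeness auto
termination by (relation "measure (\<lambda>(t, n, a). n - a)") auto

declare fz.simps[simp del]

lemma fz_ge: "a \<le> fz t n a"
proof (induction t n a rule: fz.induct)
  case (1 t n a)
  show ?case
  proof (cases "a < t a \<and> t a < n")
    case True
    then have "Suc (t a) \<le> fz t n (Suc (t a))" using 1 by blast
    then show ?thesis using True by (subst fz.simps) simp
  next
    case False then show ?thesis by (subst fz.simps) auto
  qed
qed

lemma fz_le: "a \<le> n \<Longrightarrow> fz t n a \<le> n"
proof (induction t n a rule: fz.induct)
  case (1 t n a)
  show ?case
  proof (cases "a < t a \<and> t a < n")
    case True
    then have "fz t n (Suc (t a)) \<le> n" using 1 by simp
    then show ?thesis using True by (subst fz.simps) simp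
  next
    case False then show ?thesis using 1 by (subst fz.simps) auto
  qed
qed

locale tgt =
  fixes n :: nat and t :: "nat \<Rightarrow> nat"
  assumes v: "vec n t"
    and C1: "\<And>a. 1 \<le> a \<Longrightarrow> a < n \<Longrightarrow> t a < n"
    and C2: "\<And>a b. a < b \<Longrightarrow> b < t a \<Longrightarrow> t b \<noteq> t a"
begin

abbreviation f where "f \<equiv> fz t n"

lemma lt_n: "a < t a \<Longrightarrow> t a < n"
proof -
  assume a: "a < t a"
  have "\<not> (a = 0 \<or> n < a)"
  proof
    assume "a = 0 \<or> n < a" then have "t a = a" by (rule vec_out[OF v])
    then show False using a by simp
  qed
  then have "a \<noteq> 0" "\<not> n < a" by simp_all
  moreover have "a \<noteq> n" using a vec_le[OF v, of n] by auto
  ultimately show "t a < n" using C1[of a] by simp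
qed

lemma f1: "t a = a \<Longrightarrow> f a = a" by (subst fz.simps) simp

lemma f2: "a < t a \<Longrightarrow> f a = f (Suc (t a))"
  using lt_n by (subst fz.simps) simp

lemma f_ge: "a \<le> f a" by (rule fz_ge)
lemma f_le: "a \<le> n \<Longrightarrow> f a \<le> n" by (rule fz_le)

lemma L_aux: "a < t a \<Longrightarrow> a < b \<Longrightarrow> b \<le> t a \<Longrightarrow> t a - b = d \<Longrightarrow> f b \<le> t a"
proof (induction d arbitrary: b rule: less_induct)
  case (less d)
  show ?case
  proof (cases "t b = b")
    case True then show ?thesis using f1 less.prems by simp
  next
    case False
    then have bt: "b < t b" using vec_ge[OF v, of b] by simp
    have tb: "t b \<le> t a" using vec_nest[OF v, of a b] less.prems by simp
    have "b \<noteq> t a" using tb bt by auto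
    then have "b < t a" using less.prems by simp
    then have "t b < t a" using tb C2[of a b] less.prems by auto
    then have "f (Suc (t b)) \<le> t a"
      using less.IH[of "t a - Suc (t b)" "Suc (t b)"] less.prems bt by simp
    then show ?thesis using f2[OF bt] by simp
  qed
qed

lemma L: "a < t a \<Longrightarrow> a < b \<Longrightarrow> b \<le> t a \<Longrightarrow> f b \<le> t a"
  using L_aux by blast

lemma f_nest: "a < b \<Longrightarrow> b \<le> f a \<Longrightarrow> f b \<le> f a"
proof (induction "n - a" arbitrary: a b rule: less_induct)
  case less
  show ?case
  proof (cases "a < t a")
    case False
    then have "t a = a" using vec_ge[OF v, of a] by simp
    then show ?thesis using f1 less.prems by simp
  next
    case True
    let ?c = "Suc (t a)"
    have fa: "f a = f ?c" using f2[OF True] .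
    have cn: "?c \<le> n" using lt_n[OF True] by simp
    consider "b \<le> t a" | "b = ?c" | "?c < b" by linarith
    then show ?thesis
    proof cases
      case 1
      then have "f b \<le> t a" using L[OF True less.prems(1)] by simp
      then show ?thesis using fz_ge[of ?c t n] fa by simp
    next
      case 2 then show ?thesis using fa by simp
    next
      case 3
      have "n - ?c < n - a" using cn True by simp
      then show ?thesis using less.hyps[of ?c b] 3 less.prems fa by simp
    qed
  qed
qed

lemma vec_f: "vec n f"
  unfolding vec_def
proof (intro conjI allI impI)
  fix a
  show "a \<le> f a" by (rule f_ge)
  show "a \<le> n \<Longrightarrow> f a \<le> n" by (rule f_le)
  show "a = 0 \<or> n < a \<Longrightarrow> f a = a" using f1 vec_out[OF v, of a] by simp
next
  fix a b assume "a < b \<and> b \<le> f a" then show "f b \<le> f a" using f_nest by blast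
qed

lemma K_f: "K f = t"
proof
  fix a
  note P = K_props[of a f, OF f_ge]
  show "K f a = t a"
  proof (cases "a < t a")
    case False
    then have "t a = a" using vec_ge[OF v, of a] by simp
    then show ?thesis using f1 P(6) by simp
  next
    case True
    let ?c = "Suc (t a)"
    have fa: "f a = f ?c" using f2[OF True] .
    have gt: "t a < f a" using fz_ge[of ?c t n] fa by simp
    have vpt: "vp f a (t a)" unfolding vp_def using L[OF True] by blast
    have ge: "t a \<le> K f a" using P(5)[OF _ gt vpt] True by simp
    have ne: "f a \<noteq> a" using gt True by simp
    have le: "K f a \<le> t a"
    proof (rule ccontr)
      assume "\<not> K f a \<le> t a"
      then have "a < ?c" "?c \<le> K f a" using True by auto
      then have "f ?c \<le> K f a" using P(4) unfolding vp_def by blast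
      then show False using P(3)[OF ne] fa by simp
    qed
    show ?thesis using ge le by simp
  qed
qed

end



lemma bef_idx_ex: "distinct x \<Longrightarrow> j < length x \<Longrightarrow> bef x u (x ! j) \<Longrightarrow> \<exists>i<j. x ! i = u"
proof -
  assume d: "distinct x" and j: "j < length x" and b: "bef x u (x ! j)"
  then obtain i j' where ij: "i < j'" "j' < length x" "x ! i = u" "x ! j' = x ! j" unfolding bef_def by blast
  then have "j' = j" using nth_eq_iff_index_eq[OF d ij(2) j] by simp
  then show ?thesis using ij by blast
qed

lemma pos_last:
  assumes x: "x \<in> Av312 n" and n: "n \<ge> 1"
  shows "x ! (n - 1) = n \<longleftrightarrow> (\<forall>a. 1 \<le> a \<and> a < n \<longrightarrow> E x a < n)"
proof -
  have d: "distinct x" and l: "length x = n" and s: "set x = {1..n}"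
    using AV_perms[OF x] perms_distinct perms_len perms_set by auto
  show ?thesis
  proof
    assume last: "x ! (n - 1) = n"
    show "\<forall>a. 1 \<le> a \<and> a < n \<longrightarrow> E x a < n"
    proof (intro allI impI)
      fix a assume a: "1 \<le> a \<and> a < n"
      show "E x a < n"
      proof (rule ccontr)
        assume "\<not> E x a < n"
        then have "n \<le> E x a" by simp
        then have "bef x n a" using E_iff[OF x, of a n] a by simp
        then obtain i j where ij: "i < j" "j < length x" "x ! i = n" "x ! j = a" unfolding bef_def by blast
        have "i = n - 1" using nth_eq_iff_index_eq[OF d, of i "n - 1"] ij l last n by simp
        then show False using ij l by simp
      qed
    qed
  next
    assume H: "\<forall>a. 1 \<le> a \<and> a < n \<longrightarrow> E x a < n"
    show "x ! (n - 1) = n"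
    proof (rule ccontr)
      let ?v = "x ! (n - 1)"
      assume ne: "?v \<noteq> n"
      have "?v \<in> set x" using l n by simp
      then have v: "1 \<le> ?v" "?v < n" using s ne by auto
      have "n \<in> set x" using s n by simp
      then obtain i where i: "i < n" "x ! i = n" using l by (auto simp: in_set_conv_nth)
      have "i \<noteq> n - 1" using i ne by auto
      then have "i < n - 1" using i by simp
      then have "bef x n ?v" using bef_idx[OF d, of i "n - 1"] i l n by simp
      then have "n \<le> E x ?v" using E_bef v by simp
      then show False using H v by force
    qed
  qed
qed

lemma pred_step:
  assumes x: "x \<in> Av312 n" and j: "j < n" and xj: "x ! j = a" and ea: "a < E x a"
  shows "0 < j \<and> a < x ! (j - 1) \<and> E x (x ! (j - 1)) = E x a"
proof -
  have d: "distinct x" and l: "length x = n" and s: "set x = {1..n}"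
    using AV_perms[OF x] perms_distinct perms_len perms_set by auto
  have b1: "bef x (Suc a) a" using E_iff[OF x, of a "Suc a"] ea by simp
  then obtain i where i: "i < j" "x ! i = Suc a" using bef_idx_ex[OF d, of j "Suc a"] j l xj by auto
  then have j0: "0 < j" by simp
  let ?p = "x ! (j - 1)"
  have pne: "?p \<noteq> a" using nth_eq_iff_index_eq[OF d, of "j - 1" j] j l j0 xj by simp
  have pa: "bef x ?p a" using bef_idx[OF d, of "j - 1" j] j l j0 xj by simp
  have gt: "a < ?p"
  proof (rule ccontr)
    assume "\<not> a < ?p"
    then have pl: "?p < a" using pne by simp
    have "i \<noteq> j - 1" using i pl by auto
    then have "i < j - 1" using i by simp
    then have "bef x (Suc a) ?p" using bef_idx[OF d, of i "j - 1"] i j l by simp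
    then show False using AV_no[OF x pl lessI _ pa] by blast
  qed
  have pE: "?p \<le> E x a" using E_bef[OF gt pa] .
  have le1: "E x ?p \<le> E x a" using E_nest[OF x gt pE] .
  have le2: "E x a \<le> E x ?p"
  proof (cases "E x a = ?p")
    case True then show ?thesis using E_ge[of ?p x] by simp
  next
    case False
    let ?d = "E x a"
    have dp: "?p < ?d" using pE False by simp
    have "bef x ?d a" using E_iff[OF x, of a ?d] ea by simp
    then obtain k where k: "k < j" "x ! k = ?d" using bef_idx_ex[OF d, of j ?d] j l xj by auto
    have "k \<noteq> j - 1" using k False by auto
    then have "k < j - 1" using k by simp
    then have "bef x ?d ?p" using bef_idx[OF d, of k "j - 1"] k j l by simp
    then show ?thesis using E_bef dp by simp
  qed
  show ?thesis using j0 gt le1 le2 by simp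
qed

lemma pos_dd:
  assumes x: "x \<in> Av312 n"
  shows "(\<exists>i. i + 2 < n \<and> x ! i > x ! (i + 1) \<and> x ! (i + 1) > x ! (i + 2)) \<longleftrightarrow>
         (\<exists>a b. a < b \<and> b < E x a \<and> E x b = E x a)"
proof -
  have d: "distinct x" and l: "length x = n" and s: "set x = {1..n}"
    using AV_perms[OF x] perms_distinct perms_len perms_set by auto
  show ?thesis
  proof
    assume "\<exists>i. i + 2 < n \<and> x ! i > x ! (i + 1) \<and> x ! (i + 1) > x ! (i + 2)"
    then obtain i where i: "i + 2 < n" "x ! i > x ! (i + 1)" "x ! (i + 1) > x ! (i + 2)" by blast
    let ?c = "x ! i" and ?b = "x ! (i + 1)" and ?a = "x ! (i + 2)"
    have ba: "bef x ?b ?a" using bef_idx[OF d, of "i + 1" "i + 2"] i l by simp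
    have cb: "bef x ?c ?b" using bef_idx[OF d, of i "i + 1"] i l by simp
    have bE: "?b \<le> E x ?a" using E_bef[OF i(3) ba] .
    have cE: "?c \<le> E x ?b" using E_bef[OF i(2) cb] .
    have n1: "E x ?b \<le> E x ?a" using E_nest[OF x i(3) bE] .
    have lt: "?b < E x ?a" using i(2) cE n1 by simp
    have "bef x (E x ?a) ?a" using E_iff[OF x, of ?a "E x ?a"] lt i(3) by simp
    then obtain k where k: "k < i + 2" "x ! k = E x ?a" using bef_idx_ex[OF d, of "i + 2"] i l by auto
    have "k \<noteq> i + 1" using k lt by auto
    then have "k < i + 1" using k by simp
    then have "bef x (E x ?a) ?b" using bef_idx[OF d, of k "i + 1"] k i l by simp
    then have "E x ?a \<le> E x ?b" using E_bef lt by simp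
    then show "\<exists>a b. a < b \<and> b < E x a \<and> E x b = E x a" using n1 lt i(3)
      by (intro exI[of _ ?a] exI[of _ ?b]) simp
  next
    assume "\<exists>a b. a < b \<and> b < E x a \<and> E x b = E x a"
    then obtain a b where ab: "a < b" "b < E x a" "E x b = E x a" by blast
    have ea: "a < E x a" using ab by simp
    have "a \<in> set x" using E_notin[of a x] ea by auto
    then obtain j where j: "j < n" "x ! j = a" using l by (auto simp: in_set_conv_nth)
    note Q = pred_step[OF x j ea]
    let ?p = "x ! (j - 1)"
    have pa: "bef x ?p a" using bef_idx[OF d, of "j - 1" j] j l Q by simp
    have pE: "?p < E x a"
    proof (rule ccontr)
      assume "\<not> ?p < E x a"
      then have peq: "?p = E x a" using E_bef[of a ?p x] Q pa by simp
      then have "bef x ?p b" using E_iff[OF x, of b ?p] ab by simp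
      have "bef x b a" using E_iff[OF x, of a b] ab by simp
      then obtain k where k: "k < j" "x ! k = b" using bef_idx_ex[OF d, of j b] j l by auto
      have "k \<noteq> j - 1" using k peq ab by auto
      then have "k < j - 1" using k by simp
      then have "bef x b ?p" using bef_idx[OF d, of k "j - 1"] k j l by simp
      then show False using bef_asym[OF d] \<open>bef x ?p b\<close> by blast
    qed
    then have ep: "?p < E x ?p" using Q by simp
    have j1: "j - 1 < n" using j by simp
    note R = pred_step[OF x j1 refl ep]
    let ?i = "j - 2"
    have ij: "?i + 2 = j" "?i + 1 = j - 1" "j - 1 - 1 = ?i" using Q R by auto
    show "\<exists>i. i + 2 < n \<and> x ! i > x ! (i + 1) \<and> x ! (i + 1) > x ! (i + 2)"
      using R Q j ij by (intro exI[of _ ?i]) simp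
  qed
qed



theorem theorem4p8:
  fixes n :: nat and x :: "nat list"
  assumes "n \<ge> 1" and "x \<in> Av312 n"
  shows "x \<in> Pop (Av312 n) weak_le ` Av312 n \<longleftrightarrow>
    (x ! (n - 1) = n \<and> \<not> (\<exists>i. i + 2 < n \<and> x ! i > x ! (i + 1) \<and> x ! (i + 1) > x ! (i + 2)))"
proof -
  have x: "x \<in> Av312 n" using assms(2) .
  have R: "(x ! (n - 1) = n \<and> \<not> (\<exists>i. i + 2 < n \<and> x ! i > x ! (i + 1) \<and> x ! (i + 1) > x ! (i + 2))) \<longleftrightarrow>
     ((\<forall>a. 1 \<le> a \<and> a < n \<longrightarrow> E x a < n) \<and> \<not> (\<exists>a b. a < b \<and> b < E x a \<and> E x b = E x a))"
    using pos_last[OF x assms(1)] pos_dd[OF x] by simp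
  show ?thesis
  proof
    assume "x \<in> Pop (Av312 n) weak_le ` Av312 n"
    then obtain z where z: "z \<in> Av312 n" "x = Pop (Av312 n) weak_le z" by blast
    have vz: "vec n (K (E z))" using vec_K[OF vec_E[OF z(1)]] .
    have "E x = K (E z)" using z(2) Pop_E[OF z(1)] build_E[OF vz] by simp
    then show "x ! (n - 1) = n \<and> \<not> (\<exists>i. i + 2 < n \<and> x ! i > x ! (i + 1) \<and> x ! (i + 1) > x ! (i + 2))"
      unfolding R using img_fwd[OF vec_E[OF z(1)]] by simp
  next
    assume "x ! (n - 1) = n \<and> \<not> (\<exists>i. i + 2 < n \<and> x ! i > x ! (i + 1) \<and> x ! (i + 1) > x ! (i + 2))"
    then have C: "\<forall>a. 1 \<le> a \<and> a < n \<longrightarrow> E x a < n" "\<not> (\<exists>a b. a < b \<and> b < E x a \<and> E x b = E x a)"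
      unfolding R by blast+
    interpret T: tgt n "E x"
    proof
      show "vec n (E x)" using vec_E[OF x] .
      show "\<And>a. 1 \<le> a \<Longrightarrow> a < n \<Longrightarrow> E x a < n" using C(1) by blast
      show "\<And>a b. a < b \<Longrightarrow> b < E x a \<Longrightarrow> E x b \<noteq> E x a" using C(2) by blast
    qed
    let ?f = "fz (E x) n"
    let ?z = "build ?f 1 n"
    have z: "?z \<in> Av312 n" using build_Av[OF T.vec_f] .
    have Ez: "E ?z = ?f" using build_E[OF T.vec_f] .
    have "Pop (Av312 n) weak_le ?z = build (E x) 1 n" using Pop_E[OF z] Ez T.K_f by simp
    moreover have "build (E x) 1 n = x"
    proof -
      have vx: "vec n (E x)" using vec_E[OF x] .
      show ?thesis using eq_E[OF build_Av[OF vx] x] build_E[OF vx] by simp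
    qed
    ultimately show "x \<in> Pop (Av312 n) weak_le ` Av312 n" using z by (metis image_eqI)
  qed
qed


end
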